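(* For any $s\in\mathbb{R}$ and all $f\in H^s(\mathbb{R})$, $g\in H^{s-1}(\mathbb{R})$, \begin{align*} \|\eta(t)W_R^t(f,g)\|_{L^\infty_xH_t^{\frac{2s+1}{4}}}&\lesssim\|f\|_{H^s_x}+\|g\|_{H^{s-1}_x},\\ \|\eta(t)\,\partial_x[W_R^t(f,g)]\|_{L^\infty_xH_t^{\frac{2s-1}{4}}}&\lesssim\|f\|_{H^s_x}+\|g\|_{H^{s-1}_x}, \end{align*} with implicit constants independent of $f,g$.
   Context: $W_{R,1}^t$ and $W_{R,2}^t$ are the spatial Fourier multiplier operators with symbols $\operatorname{Re}e^{it\sqrt{\xi^2+\xi^4}}$ and $\operatorname{Im}e^{it\sqrt{\xi^2+\xi^4}}(\xi^2+\xi^4)^{-1/2}$ respectively, and $W_R^t(f,g)=W_{R,1}^tf+W_{R,2}^tg_x$ (the solution on $\mathbb{R}$ of $w_{tt}-w_{xx}+w_{xxxx}=0$ with $w(x,0)=f$, $w_t(x,0)=g_x$). $\eta\in C^\infty(\mathbb{R})$ satisfies $\eta=1$ on $[-1,1]$ and $\operatorname{supp}\eta\subset[-2,2]$. $a\lesssim b$ means $a\le Cb$ for an absolute constant $C$. *)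

theory Defs
  imports "HOL-Analysis.Analysis"
begin

text \<open>Fourier transform: hat f xi = integral of f x * exp(-i x xi) dx,
  inverse: f x = (1/(2 pi)) integral of exp(i x xi) * hat f xi dxi.
  A (tempered) distribution f in H^s(R) is represented by its Fourier transform
  fh :: real => complex, a Borel function with
  norm_H^s f = ( integral (1+xi^2)^s |fh xi|^2 dxi )^(1/2) finite.\<close>

definition smooth_real :: "(real \<Rightarrow> real) \<Rightarrow> bool" where
  "smooth_real h \<longleftrightarrow> (\<forall>n x. (deriv ^^ n) h differentiable (at x))"

definition is_cutoff :: "(real \<Rightarrow> real) \<Rightarrow> bool" where
  "is_cutoff \<eta> \<longleftrightarrow> smooth_real \<eta> \<and> (\<forall>t\<in>{-1..1}. \<eta> t = 1)
      \<and> (\<forall>t. \<eta> t \<noteq> 0 \<longrightarrow> t \<in> {-2..2})"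

definition Hs_sq :: "real \<Rightarrow> (real \<Rightarrow> complex) \<Rightarrow> ennreal" where
  "Hs_sq s fh = (\<integral>\<^sup>+ \<xi>. ennreal ((1 + \<xi>\<^sup>2) powr s * (cmod (fh \<xi>))\<^sup>2) \<partial>lborel)"

definition in_Hs :: "real \<Rightarrow> (real \<Rightarrow> complex) \<Rightarrow> bool" where
  "in_Hs s fh \<longleftrightarrow> fh \<in> borel_measurable lborel \<and> Hs_sq s fh < \<infinity>"

definition Hs_norm :: "real \<Rightarrow> (real \<Rightarrow> complex) \<Rightarrow> real" where
  "Hs_norm s fh = sqrt (enn2real (Hs_sq s fh))"

definition omega :: "real \<Rightarrow> real" where
  "omega \<xi> = sqrt (\<xi>\<^sup>2 + \<xi>^4)"

definition sym1 :: "real \<Rightarrow> real \<Rightarrow> real" where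
  "sym1 t \<xi> = Re (exp (\<i> * complex_of_real (t * omega \<xi>)))"

definition sym2 :: "real \<Rightarrow> real \<Rightarrow> real" where
  "sym2 t \<xi> = Im (exp (\<i> * complex_of_real (t * omega \<xi>))) * (\<xi>\<^sup>2 + \<xi>^4) powr (-1/2)"

text \<open>Spatial Fourier transform of W_R^t(f,g) = W_{R,1}^t f + W_{R,2}^t g_x at frequency xi.\<close>
definition WR_hat :: "(real \<Rightarrow> complex) \<Rightarrow> (real \<Rightarrow> complex) \<Rightarrow> real \<Rightarrow> real \<Rightarrow> complex" where
  "WR_hat fh gh t \<xi> = complex_of_real (sym1 t \<xi>) * fh \<xi>
      + complex_of_real (sym2 t \<xi>) * (\<i> * complex_of_real \<xi> * gh \<xi>)"

text \<open>Temporal Fourier transform (variable tau) of the function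
  t |-> eta(t) * (inverse spatial Fourier transform of (mlt xi) * WR_hat fh gh t xi)(x),
  with the t-integral taken inside the xi-integral (Fubini).  mlt = 1 gives eta W_R^t(f,g),
  mlt xi = i xi gives eta d_x W_R^t(f,g).\<close>
definition time_FT :: "(real \<Rightarrow> real) \<Rightarrow> (real \<Rightarrow> complex) \<Rightarrow> (real \<Rightarrow> complex)
      \<Rightarrow> (real \<Rightarrow> complex) \<Rightarrow> real \<Rightarrow> real \<Rightarrow> complex" where
  "time_FT \<eta> mlt fh gh x \<tau> =
     complex_of_real (1 / (2 * pi)) *
     (\<integral>\<xi>. exp (\<i> * complex_of_real (x * \<xi>)) * mlt \<xi> *
        (\<integral>t. complex_of_real (\<eta> t) * WR_hat fh gh t \<xi> * exp (- \<i> * complex_of_real (t * \<tau>)) \<partial>lborel)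
      \<partial>lborel)"

definition time_Hs_sq :: "real \<Rightarrow> (real \<Rightarrow> real) \<Rightarrow> (real \<Rightarrow> complex) \<Rightarrow> (real \<Rightarrow> complex)
      \<Rightarrow> (real \<Rightarrow> complex) \<Rightarrow> real \<Rightarrow> ennreal" where
  "time_Hs_sq r \<eta> mlt fh gh x =
     (\<integral>\<^sup>+ \<tau>. ennreal ((1 + \<tau>\<^sup>2) powr r * (cmod (time_FT \<eta> mlt fh gh x \<tau>))\<^sup>2) \<partial>lborel)"

end

theory Submission
  imports Defs
begin

definition FT :: "(real \<Rightarrow> real) \<Rightarrow> real \<Rightarrow> complex" where
  "FT h \<sigma> = (\<integral>t. complex_of_real (h t) * exp (- \<i> * complex_of_real (t * \<sigma>)) \<partial>lborel)"

lemma FT_HK: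
  assumes c: "continuous_on UNIV h" and z: "\<And>t. \<bar>t\<bar> > 2 \<Longrightarrow> h t = 0"
  shows "integrable lborel (\<lambda>t. complex_of_real (h t) * exp (- \<i> * complex_of_real (t * \<sigma>)))"
    and "FT h \<sigma> = integral {-2..2} (\<lambda>t. complex_of_real (h t) * exp (- \<i> * complex_of_real (t * \<sigma>)))"
proof -
  let ?f = "\<lambda>t. complex_of_real (h t) * exp (- \<i> * complex_of_real (t * \<sigma>))"
  have cf: "continuous_on {-2..2} ?f"
    by (intro continuous_intros continuous_on_subset[OF c]) auto
  have eq: "(\<lambda>x. indicator {-2..2} x *\<^sub>R ?f x) = ?f"
    by (rule ext) (auto simp: indicator_def z)
  show I: "integrable lborel ?f"
    using borel_integrable_compact[OF compact_Icc cf] unfolding eq .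
  have "(?f has_integral FT h \<sigma>) UNIV"
    using has_integral_integral_lborel[OF I] unfolding FT_def .
  then have "integral UNIV ?f = FT h \<sigma>" by blast
  moreover have "integral UNIV (\<lambda>x. if x \<in> {-2..2} then ?f x else 0) = integral {-2..2} ?f"
    by (rule integral_restrict_UNIV)
  moreover have "(\<lambda>x. if x \<in> {-2..2} then ?f x else 0) = ?f"
    by (rule ext) (auto simp: z)
  ultimately show "FT h \<sigma> = integral {-2..2} ?f" by simp
qed

lemma FT_ibp:
  assumes d: "\<And>t. (h has_real_derivative h' t) (at t)"
    and c': "continuous_on UNIV h'"
    and z: "\<And>t. \<bar>t\<bar> > 2 \<Longrightarrow> h t = 0" and z': "\<And>t. \<bar>t\<bar> > 2 \<Longrightarrow> h' t = 0"
  shows "FT h' \<sigma> = \<i> * complex_of_real \<sigma> * FT h \<sigma>"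
proof -
  have c: "continuous_on UNIV h" using d
    by (meson DERIV_isCont continuous_at_imp_continuous_on)
  have h2: "h 2 = 0" "h (-2) = 0"
  proof -
    have "((\<lambda>n. h (2 + 1 / Suc n)) \<longlonglongrightarrow> h (2 + 0))"
      by (intro continuous_on_tendsto_compose[OF c] tendsto_intros LIMSEQ_inverse_real_of_nat[unfolded inverse_eq_divide]) auto
    moreover have "(\<lambda>n. h (2 + 1 / Suc n)) = (\<lambda>n. 0)"
      by (rule ext, rule z) (auto simp: add_pos_pos)
    ultimately show "h 2 = 0" by (simp add: LIMSEQ_const_iff)
    have "((\<lambda>n. h (-2 - 1 / Suc n)) \<longlonglongrightarrow> h (-2 - 0))"
      by (intro continuous_on_tendsto_compose[OF c] tendsto_intros LIMSEQ_inverse_real_of_nat[unfolded inverse_eq_divide]) auto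
    moreover have "(\<lambda>n. h (-2 - 1 / Suc n)) = (\<lambda>n. 0)"
    proof (rule ext, rule z)
      fix n have "0 < 1 / real (Suc n)" by simp
      then show "2 < \<bar>- 2 - 1 / real (Suc n)\<bar>" by linarith
    qed
    ultimately show "h (-2) = 0" by (simp add: LIMSEQ_const_iff)
  qed
  let ?e = "\<lambda>t. exp (- \<i> * complex_of_real (t * \<sigma>))"
  let ?F = "\<lambda>t. complex_of_real (h t) * ?e t"
  let ?f1 = "\<lambda>t. complex_of_real (h' t) * ?e t"
  let ?f2 = "\<lambda>t. complex_of_real (h t) * ?e t"
  have D: "(?F has_vector_derivative (?f1 t - \<i> * complex_of_real \<sigma> * ?f2 t)) (at t within {-2..2})" for t
  proof -
    have e: "(?e has_vector_derivative (- \<i> * complex_of_real \<sigma> * ?e t)) (at t within {-2..2})"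
    proof -
      have "((\<lambda>z. exp (- \<i> * (z * complex_of_real \<sigma>))) has_field_derivative
          (- \<i> * complex_of_real \<sigma> * exp (- \<i> * (complex_of_real t * complex_of_real \<sigma>)))) (at (of_real t))"
        by (rule derivative_eq_intros refl)+ (simp add: algebra_simps)
      from has_vector_derivative_real_field[OF this] show ?thesis by simp
    qed
    have hh: "((\<lambda>t. complex_of_real (h t)) has_vector_derivative complex_of_real (h' t)) (at t within {-2..2})"
      by (rule has_vector_derivative_of_real, rule has_field_derivative_at_within, rule d)
    have eq: "complex_of_real (h t) * (- \<i> * complex_of_real \<sigma> * ?e t) + complex_of_real (h' t) * ?e t
       = ?f1 t - \<i> * complex_of_real \<sigma> * ?f2 t" by (simp add: algebra_simps)
    from has_vector_derivative_mult[OF hh e] show ?thesis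
      unfolding eq .
  qed
  have "((\<lambda>t. ?f1 t - \<i> * complex_of_real \<sigma> * ?f2 t) has_integral ?F 2 - ?F (-2)) {-2..2}"
    by (rule fundamental_theorem_of_calculus) (use D in auto)
  then have I0: "((\<lambda>t. ?f1 t - \<i> * complex_of_real \<sigma> * ?f2 t) has_integral 0) {-2..2}"
    using h2 by simp
  have i1: "?f1 integrable_on {-2..2}"
    by (intro integrable_continuous_interval continuous_intros continuous_on_subset[OF c']) auto
  have i2: "?f2 integrable_on {-2..2}"
    by (intro integrable_continuous_interval continuous_intros continuous_on_subset[OF c]) auto
  have "((\<lambda>t. ?f1 t - \<i> * complex_of_real \<sigma> * ?f2 t) has_integral
      integral {-2..2} ?f1 - \<i> * complex_of_real \<sigma> * integral {-2..2} ?f2) {-2..2}"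
    by (intro has_integral_diff has_integral_mult_right integrable_integral i1 i2)
  from has_integral_unique[OF this I0]
  have "integral {-2..2} ?f1 = \<i> * complex_of_real \<sigma> * integral {-2..2} ?f2"
    by simp
  moreover have "FT h' \<sigma> = integral {-2..2} ?f1" by (rule FT_HK(2)[OF c' z'])
  moreover have "FT h \<sigma> = integral {-2..2} ?f2" by (rule FT_HK(2)[OF c z])
  ultimately show ?thesis by simp
qed

lemma Dk_deriv:
  assumes "smooth_real \<eta>"
  shows "((deriv ^^ k) \<eta> has_real_derivative (deriv ^^ Suc k) \<eta> t) (at t)"
  using assms unfolding smooth_real_def
  by (simp add: DERIV_deriv_iff_real_differentiable)

lemma Dk_cont:
  assumes "smooth_real \<eta>"
  shows "continuous_on UNIV ((deriv ^^ k) \<eta>)"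
  using Dk_deriv[OF assms]
  by (meson DERIV_isCont continuous_at_imp_continuous_on)

lemma Dk_zero:
  assumes "smooth_real \<eta>" and z: "\<And>t. \<bar>t\<bar> > 2 \<Longrightarrow> \<eta> t = 0"
  shows "\<bar>t\<bar> > 2 \<Longrightarrow> (deriv ^^ k) \<eta> t = 0"
proof (induction k arbitrary: t)
  case 0 then show ?case using z by simp
next
  case (Suc k)
  have "((deriv ^^ k) \<eta> has_real_derivative 0) (at t)"
    apply (rule has_field_derivative_transform_within_open[of "\<lambda>_. 0" 0 t "{t. \<bar>t\<bar> > 2}"])
    using Suc by (auto intro!: open_Collect_less continuous_intros)
  moreover note Dk_deriv[OF assms(1), of k t]
  ultimately show ?case using DERIV_unique by metis
qed

lemma FT_Dk:
  assumes "smooth_real \<eta>" and z: "\<And>t. \<bar>t\<bar> > 2 \<Longrightarrow> \<eta> t = 0"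
  shows "FT ((deriv ^^ k) \<eta>) \<sigma> = (\<i> * complex_of_real \<sigma>) ^ k * FT \<eta> \<sigma>"
proof (induction k)
  case 0 then show ?case by simp
next
  case (Suc k)
  have "FT ((deriv ^^ Suc k) \<eta>) \<sigma> = \<i> * complex_of_real \<sigma> * FT ((deriv ^^ k) \<eta>) \<sigma>"
    by (rule FT_ibp[OF Dk_deriv[OF assms(1)] Dk_cont[OF assms(1)] Dk_zero[OF assms] Dk_zero[OF assms]])
  then show ?case using Suc by simp
qed

lemma FT_bound:
  assumes "continuous_on UNIV h" "\<And>t. \<bar>t\<bar> > 2 \<Longrightarrow> h t = 0"
  shows "cmod (FT h \<sigma>) \<le> (\<integral>t. \<bar>h t\<bar> \<partial>lborel)"
proof -
  have "cmod (FT h \<sigma>) \<le> (\<integral>t. cmod (complex_of_real (h t) * exp (- \<i> * complex_of_real (t * \<sigma>))) \<partial>lborel)"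
    unfolding FT_def by (rule integral_norm_bound)
  also have "\<dots> = (\<integral>t. \<bar>h t\<bar> \<partial>lborel)"
    by (simp add: norm_mult)
  finally show ?thesis .
qed

lemma pow_split: "(1 + x) ^ N \<le> 2 ^ N * (1 + x ^ N)" if "(x::real) \<ge> 0" for N
proof (cases "x \<le> 1")
  case True
  have "(1 + x) ^ N \<le> 2 ^ N" using True that by (intro power_mono) auto
  also have "\<dots> \<le> 2 ^ N * (1 + x ^ N)" using that by simp
  finally show ?thesis .
next
  case False
  have "(1 + x) ^ N \<le> (2 * x) ^ N" using False that by (intro power_mono) auto
  also have "\<dots> \<le> 2 ^ N * (1 + x ^ N)" using that by (simp add: power_mult_distrib)
  finally show ?thesis .
qed

lemma FT_decay:
  assumes "smooth_real \<eta>" and z: "\<And>t. \<bar>t\<bar> > 2 \<Longrightarrow> \<eta> t = 0"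
  shows "\<exists>C\<ge>0. \<forall>\<sigma>. cmod (FT \<eta> \<sigma>) * (1 + \<sigma>\<^sup>2) ^ N \<le> C"
proof -
  define M where "M k = (\<integral>t. \<bar>(deriv ^^ k) \<eta> t\<bar> \<partial>lborel)" for k
  have B: "cmod (FT \<eta> \<sigma>) * \<bar>\<sigma>\<bar> ^ k \<le> M k" for k \<sigma>
  proof -
    have "cmod (FT ((deriv ^^ k) \<eta>) \<sigma>) \<le> M k"
      unfolding M_def by (rule FT_bound[OF Dk_cont[OF assms(1)] Dk_zero[OF assms]])
    moreover have "cmod (FT ((deriv ^^ k) \<eta>) \<sigma>) = cmod (FT \<eta> \<sigma>) * \<bar>\<sigma>\<bar> ^ k"
      by (simp add: FT_Dk[OF assms] norm_mult norm_power)
    ultimately show ?thesis by simp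
  qed
  have M0: "M k \<ge> 0" for k unfolding M_def by simp
  show ?thesis
  proof (intro exI[of _ "2 ^ N * (M 0 + M (2 * N))"] conjI allI)
    show "0 \<le> 2 ^ N * (M 0 + M (2 * N))" using M0 by simp
    fix \<sigma> :: real
    have "cmod (FT \<eta> \<sigma>) * (1 + \<sigma>\<^sup>2) ^ N \<le> cmod (FT \<eta> \<sigma>) * (2 ^ N * (1 + (\<sigma>\<^sup>2) ^ N))"
      by (intro mult_left_mono pow_split) auto
    also have "\<dots> = 2 ^ N * (cmod (FT \<eta> \<sigma>) * \<bar>\<sigma>\<bar> ^ 0 + cmod (FT \<eta> \<sigma>) * \<bar>\<sigma>\<bar> ^ (2 * N))"
    proof -
      have "(\<sigma>\<^sup>2) ^ N = \<bar>\<sigma>\<bar> ^ (2 * N)" by (simp add: power_mult)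
      then show ?thesis by (simp add: algebra_simps)
    qed
    also have "\<dots> \<le> 2 ^ N * (M 0 + M (2 * N))"
      by (intro mult_left_mono add_mono B) auto
    finally show "cmod (FT \<eta> \<sigma>) * (1 + \<sigma>\<^sup>2) ^ N \<le> 2 ^ N * (M 0 + M (2 * N))" .
  qed
qed

lemma exp_pm:
  "exp (- \<i> * complex_of_real (u - y)) = exp (\<i> * of_real y) * exp (- \<i> * complex_of_real u)"
  "exp (- \<i> * complex_of_real (u + y)) = exp (-(\<i> * of_real y)) * exp (- \<i> * complex_of_real u)"
  by (simp_all add: exp_add[symmetric] algebra_simps)
lemma cos_id: "complex_of_real (cos y) * exp (- \<i> * complex_of_real u)
   = (exp (- \<i> * complex_of_real (u - y)) + exp (- \<i> * complex_of_real (u + y))) / 2"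
proof -
  have hc: "complex_of_real (cos y) = (exp(\<i> * of_real y) + exp(-(\<i> * of_real y))) / 2"
    by (simp add: cos_of_real[symmetric] cos_exp_eq)
  show ?thesis unfolding exp_pm hc
    by (simp add: field_simps)
qed
lemma sin_id: "complex_of_real (sin y) * exp (- \<i> * complex_of_real u)
   = (exp (- \<i> * complex_of_real (u - y)) - exp (- \<i> * complex_of_real (u + y))) / (2 * \<i>)"
proof -
  have hc: "complex_of_real (sin y) = (exp(\<i> * of_real y) - exp(-(\<i> * of_real y))) / (2*\<i>)"
    by (simp add: sin_of_real[symmetric] sin_exp_eq)
  show ?thesis unfolding exp_pm hc
    by (simp add: field_simps)
qed

lemma cos_id': "complex_of_real (cos (t * w)) * exp (- \<i> * complex_of_real (t * \<tau>))
   = (exp (- \<i> * complex_of_real (t * (\<tau> - w))) + exp (- \<i> * complex_of_real (t * (\<tau> + w)))) / 2"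
  using cos_id[of "t * w" "t * \<tau>"] by (simp add: right_diff_distrib distrib_left)
lemma sin_id': "complex_of_real (sin (t * w)) * exp (- \<i> * complex_of_real (t * \<tau>))
   = (exp (- \<i> * complex_of_real (t * (\<tau> - w))) - exp (- \<i> * complex_of_real (t * (\<tau> + w)))) / (2 * \<i>)"
  using sin_id[of "t * w" "t * \<tau>"] by (simp add: right_diff_distrib distrib_left)

lemma h1: "(a::complex) * (C * F + (S * P) * G) * E = a * (F * (C * E) + (P * G) * (S * E))"
  by (simp add: distrib_left distrib_right mult_ac)
lemma h2r: "(a::complex) * (F * ((X + Y) * p) + c * ((X - Y) * q)) = (F * p + c * q) * (a*X) + (F * p - c * q) * (a*Y)"
  by algebra
lemma h2: "(a::complex) * (F * ((X + Y)/2) + c * ((X - Y)/d)) = (F/2 + c/d) * (a*X) + (F/2 - c/d) * (a*Y)"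
  using h2r[of a F X Y "1/2" c "1/d"] by simp

definition wt :: "real \<Rightarrow> real" where "wt \<xi> = \<xi> * sqrt (1 + \<xi>\<^sup>2)"

lemma omega_wt_aux: "sqrt (\<xi>\<^sup>2 + \<xi> ^ 4) = \<bar>\<xi> * sqrt (1 + \<xi>\<^sup>2)\<bar>"
proof -
  have "\<xi>\<^sup>2 + \<xi> ^ 4 = \<xi>\<^sup>2 * (1 + \<xi>\<^sup>2)" by (simp add: algebra_simps power2_eq_square power4_eq_xxxx)
  then show ?thesis by (simp add: real_sqrt_mult abs_mult)
qed
lemma omega_wt: "omega \<xi> = \<bar>wt \<xi>\<bar>"
  unfolding omega_def wt_def by (rule omega_wt_aux)

lemma p_bound: "\<bar>(\<xi>\<^sup>2 + \<xi> ^ 4) powr (-1/2)\<bar> * \<bar>\<xi>\<bar> \<le> 1 / sqrt (1 + \<xi>\<^sup>2)"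
proof (cases "\<xi> = 0")
  case True then show ?thesis by simp
next
  case False
  have pos: "\<xi>\<^sup>2 + \<xi> ^ 4 > 0" using False by (simp add: add_pos_nonneg)
  have m: "(-1/2::real) = - (1/2)" by simp
  have "(\<xi>\<^sup>2 + \<xi> ^ 4) powr (-1/2) = 1 / sqrt (\<xi>\<^sup>2 + \<xi> ^ 4)"
    unfolding m powr_minus_divide using pos by (simp add: powr_half_sqrt)
  also have "\<dots> = 1 / (\<bar>\<xi>\<bar> * sqrt (1 + \<xi>\<^sup>2))" unfolding omega_wt_aux by (simp add: abs_mult)
  finally show ?thesis using False by simp
qed
definition afun :: "(real \<Rightarrow> complex) \<Rightarrow> (real \<Rightarrow> complex) \<Rightarrow> real \<Rightarrow> real" where
  "afun fh gh \<xi> = cmod (fh \<xi>) + cmod (gh \<xi>) / sqrt (1 + \<xi>\<^sup>2)"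

lemma A_bound:
  assumes c: "continuous_on UNIV \<eta>" and z: "\<And>t. \<bar>t\<bar> > 2 \<Longrightarrow> \<eta> t = 0"
  shows "cmod (\<integral>t. complex_of_real (\<eta> t) * WR_hat fh gh t \<xi> * exp (- \<i> * complex_of_real (t * \<tau>)) \<partial>lborel)
    \<le> afun fh gh \<xi> * (cmod (FT \<eta> (\<tau> - wt \<xi>)) + cmod (FT \<eta> (\<tau> + wt \<xi>)))"
proof -
  define w where "w = omega \<xi>"
  define p where "p = (\<xi>\<^sup>2 + \<xi> ^ 4) powr (-1/2)"
  define c2 where "c2 = complex_of_real p * (\<i> * complex_of_real \<xi> * gh \<xi>)"
  define g where "g \<sigma> t = complex_of_real (\<eta> t) * exp (- \<i> * complex_of_real (t * \<sigma>))" for \<sigma> t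
  define \<alpha> where "\<alpha> = fh \<xi> / 2 + c2 / (2 * \<i>)"
  define \<beta> where "\<beta> = fh \<xi> / 2 - c2 / (2 * \<i>)"
  have s1: "sym1 t \<xi> = cos (t * w)" for t unfolding sym1_def w_def by (simp add: Re_exp)
  have s2: "sym2 t \<xi> = sin (t * w) * p" for t unfolding sym2_def w_def p_def by (simp add: Im_exp)
  have pt: "complex_of_real (\<eta> t) * WR_hat fh gh t \<xi> * exp (- \<i> * complex_of_real (t * \<tau>))
      = \<alpha> * g (\<tau> - w) t + \<beta> * g (\<tau> + w) t" for t
  proof -
    have "complex_of_real (\<eta> t) * WR_hat fh gh t \<xi> * exp (- \<i> * complex_of_real (t * \<tau>))
      = complex_of_real (\<eta> t) * (fh \<xi> * (complex_of_real (cos (t * w)) * exp (- \<i> * complex_of_real (t * \<tau>)))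
         + c2 * (complex_of_real (sin (t * w)) * exp (- \<i> * complex_of_real (t * \<tau>))))"
      unfolding WR_hat_def s1 s2 c2_def of_real_mult by (rule h1)
    also have "\<dots> = \<alpha> * g (\<tau> - w) t + \<beta> * g (\<tau> + w) t"
      unfolding cos_id' sin_id' \<alpha>_def \<beta>_def g_def by (rule h2)
    finally show ?thesis .
  qed
  have I: "integrable lborel (g \<sigma>)" for \<sigma> unfolding g_def by (rule FT_HK(1)[OF c z])
  have FTg: "FT \<eta> \<sigma> = integral\<^sup>L lborel (g \<sigma>)" for \<sigma> unfolding FT_def g_def ..
  have "(\<integral>t. complex_of_real (\<eta> t) * WR_hat fh gh t \<xi> * exp (- \<i> * complex_of_real (t * \<tau>)) \<partial>lborel)
      = \<alpha> * FT \<eta> (\<tau> - w) + \<beta> * FT \<eta> (\<tau> + w)"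
    unfolding pt FTg using I by simp
  also have "cmod \<dots> \<le> cmod \<alpha> * cmod (FT \<eta> (\<tau> - w)) + cmod \<beta> * cmod (FT \<eta> (\<tau> + w))"
    by (rule order_trans[OF norm_triangle_ineq]) (simp add: norm_mult)
  also have "\<dots> \<le> afun fh gh \<xi> * cmod (FT \<eta> (\<tau> - w)) + afun fh gh \<xi> * cmod (FT \<eta> (\<tau> + w))"
  proof -
    have c2b: "cmod c2 \<le> cmod (gh \<xi>) / sqrt (1 + \<xi>\<^sup>2)"
    proof -
      have "cmod c2 = (\<bar>p\<bar> * \<bar>\<xi>\<bar>) * cmod (gh \<xi>)" unfolding c2_def by (simp add: norm_mult)
      also have "\<dots> \<le> (1 / sqrt (1 + \<xi>\<^sup>2)) * cmod (gh \<xi>)"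
        unfolding p_def by (intro mult_right_mono p_bound) auto
      finally show ?thesis by simp
    qed
    have ab: "cmod \<alpha> \<le> afun fh gh \<xi>" "cmod \<beta> \<le> afun fh gh \<xi>"
    proof -
      have n: "cmod (c2 / (2 * \<i>)) = cmod c2 / 2" "cmod (fh \<xi> / 2) = cmod (fh \<xi>) / 2"
        by (simp_all add: norm_divide norm_mult)
      have "cmod \<alpha> \<le> cmod (fh \<xi>) / 2 + cmod c2 / 2" unfolding \<alpha>_def
        by (metis n norm_triangle_ineq)
      then show "cmod \<alpha> \<le> afun fh gh \<xi>" using c2b norm_ge_zero[of "fh \<xi>"] norm_ge_zero[of c2] unfolding afun_def by linarith
      have "cmod \<beta> \<le> cmod (fh \<xi>) / 2 + cmod c2 / 2" unfolding \<beta>_def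
        by (metis n norm_triangle_ineq4)
      then show "cmod \<beta> \<le> afun fh gh \<xi>" using c2b norm_ge_zero[of "fh \<xi>"] norm_ge_zero[of c2] unfolding afun_def by linarith
    qed
    show ?thesis by (intro add_mono mult_right_mono ab) auto
  qed
  also have "\<dots> = afun fh gh \<xi> * (cmod (FT \<eta> (\<tau> - wt \<xi>)) + cmod (FT \<eta> (\<tau> + wt \<xi>)))"
  proof (cases "wt \<xi> \<ge> 0")
    case True
    then have "w = wt \<xi>" unfolding w_def omega_wt by simp
    then show ?thesis by (simp add: ring_distribs)
  next
    case False
    then have "w = - wt \<xi>" unfolding w_def omega_wt by simp
    then show ?thesis by (simp add: ring_distribs)
  qed
  finally show ?thesis .
qed

lemma arctan_nn:
  fixes g g' :: "real \<Rightarrow> real"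
  assumes d: "\<And>x. (g has_real_derivative g' x) (at x)"
    and c: "continuous_on UNIV g'" and nn: "\<And>x. g' x \<ge> 0"
    and top: "filterlim g at_top at_top" and bot: "filterlim g at_bot at_bot"
  shows "(\<integral>\<^sup>+x. ennreal (g' x / (1 + (g x - c)\<^sup>2)) \<partial>lborel) = ennreal pi"
proof -
  let ?f = "\<lambda>x. g' x / (1 + (g x - c)\<^sup>2)"
  let ?F = "\<lambda>x. arctan (g x - c)"
  have gc: "continuous_on UNIV g" using d
    by (meson DERIV_isCont continuous_at_imp_continuous_on)
  have D: "(?F has_real_derivative ?f x) (at x)" for x
    by (auto intro!: derivative_eq_intros d simp: field_simps)
  have p2: "\<And>y::real. 1 + y\<^sup>2 \<noteq> 0" by (smt (verit) zero_le_power2)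
  have C: "isCont ?f x" for x
    using c gc p2 by (auto intro!: continuous_intros simp: continuous_on_eq_continuous_at add_pos_nonneg)
  have A: "((?F \<circ> real_of_ereal) \<longlongrightarrow> - (pi/2)) (at_right (-\<infinity>))"
    unfolding ereal_tendsto_simps
    apply (rule filterlim_compose[OF tendsto_arctan_at_bot])
    using bot unfolding filterlim_at_bot
    by (metis (mono_tags, lifting) diff_le_eq eventually_mono)
  have B: "((?F \<circ> real_of_ereal) \<longlongrightarrow> pi/2) (at_left \<infinity>)"
    unfolding ereal_tendsto_simps
    apply (rule filterlim_compose[OF tendsto_arctan_at_top])
    using top unfolding filterlim_at_top
    by (metis (mono_tags, lifting) le_diff_eq eventually_mono)
  have nn2: "\<And>x. 0 \<le> ?f x" using nn by (simp add: add_pos_nonneg)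
  note R = interval_integral_FTC_nonneg[of "-\<infinity>" \<infinity> ?F ?f, OF _ D C _ A B]
  have "set_integrable lborel (einterval (-\<infinity>) \<infinity>) ?f" "(LBINT x=-\<infinity>..\<infinity>. ?f x) = pi/2 - - (pi/2)"
    using R nn2 by auto
  then have I: "integrable lborel ?f" "integral\<^sup>L lborel ?f = pi"
    by (simp_all add: set_integrable_def interval_lebesgue_integral_def set_lebesgue_integral_def)
  show ?thesis using nn_integral_eq_integral[OF I(1)] nn2 I(2) by simp
qed

definition Qf :: "real \<Rightarrow> real" where "Qf y = 1 / (1 + y\<^sup>2)"
definition rho :: "real \<Rightarrow> real" where "rho \<xi> = sqrt (1 + \<xi>\<^sup>2)"
definition wtd :: "real \<Rightarrow> real" where "wtd \<xi> = sqrt (1 + \<xi>\<^sup>2) + \<xi>\<^sup>2 / sqrt (1 + \<xi>\<^sup>2)"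

lemma Qf_pos: "Qf y > 0" and Qf_le1: "Qf y \<le> 1"
  unfolding Qf_def by (simp_all add: add_pos_nonneg)

lemma rho_pos: "rho \<xi> > 0" unfolding rho_def by (simp add: add_pos_nonneg)

lemma wt_deriv: "(wt has_real_derivative wtd x) (at x)"
proof -
  have p: "1 + x\<^sup>2 > 0" by (simp add: add_pos_nonneg)
  show ?thesis unfolding wt_def wtd_def
    using p by (auto intro!: derivative_eq_intros simp: field_simps power2_eq_square)
qed

lemma rho_le_wtd: "rho \<xi> \<le> wtd \<xi>"
  unfolding rho_def wtd_def by simp

lemma wtd_cont: "continuous_on UNIV wtd"
proof -
  have p: "\<And>x::real. 1 + x\<^sup>2 \<noteq> 0" by (smt (verit) zero_le_power2)
  show ?thesis unfolding wtd_def using p by (intro continuous_intros) auto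
qed

lemma wt_top: "filterlim wt at_top at_top"
proof (rule filterlim_at_top_mono[OF filterlim_ident])
  show "eventually (\<lambda>x. x \<le> wt x) at_top"
    using eventually_ge_at_top[of "0::real"]
  proof (rule eventually_mono)
    fix x :: real assume "0 \<le> x"
    moreover have "1 \<le> sqrt (1 + x\<^sup>2)" by simp
    ultimately show "x \<le> wt x" unfolding wt_def
      using mult_left_mono[of 1 "sqrt (1 + x\<^sup>2)" x] by simp
  qed
qed

lemma wt_bot: "filterlim wt at_bot at_bot"
  unfolding filterlim_at_bot
proof
  fix Z :: real
  have "eventually (\<lambda>x. x \<le> min Z 0) at_bot" by (rule eventually_le_at_bot)
  then show "eventually (\<lambda>x. wt x \<le> Z) at_bot"
  proof (rule eventually_mono)
    fix x :: real assume x: "x \<le> min Z 0"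
    have "1 \<le> sqrt (1 + x\<^sup>2)" by simp
    then have "x * sqrt (1 + x\<^sup>2) \<le> x * 1" using x by (intro mult_left_mono_neg) auto
    then show "wt x \<le> Z" unfolding wt_def using x by simp
  qed
qed

lemma Q_shift_int: "(\<integral>\<^sup>+\<tau>. ennreal (Qf (\<tau> - v)) \<partial>lborel) = ennreal pi"
proof -
  have p: "\<And>x::real. 1 + x\<^sup>2 \<noteq> 0" by (smt (verit) zero_le_power2)
  show ?thesis using arctan_nn[of "\<lambda>x. x" "\<lambda>_. 1" v] unfolding Qf_def
    by (simp add: filterlim_ident p)
qed

lemma Q_wt_int: "(\<integral>\<^sup>+\<xi>. ennreal (Qf (wt \<xi> - c) * wtd \<xi>) \<partial>lborel) = ennreal pi"
proof -
  have nn: "wtd x \<ge> 0" for x using rho_le_wtd[of x] rho_pos[of x] by simp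
  show ?thesis
    using arctan_nn[of wt wtd c, OF wt_deriv wtd_cont nn wt_top wt_bot] unfolding Qf_def
    by (simp add: mult.commute)
qed

lemma peetre:
  fixes r :: real and N :: nat
  assumes N: "real N \<ge> 1 + \<bar>r\<bar>"
  shows "(1 + \<tau>\<^sup>2) powr r * Qf (\<tau> - v) ^ N \<le> 2 powr \<bar>r\<bar> * (1 + v\<^sup>2) powr r * Qf (\<tau> - v)"
proof -
  define A where "A = 1 + \<tau>\<^sup>2"
  define B where "B = 1 + v\<^sup>2"
  define D where "D = 1 + (\<tau> - v)\<^sup>2"
  have A1: "A \<ge> 1" and B1: "B \<ge> 1" and D1: "D \<ge> 1" unfolding A_def B_def D_def by simp_all
  have AB: "A \<le> 2 * B * D"
  proof -
    have "\<tau>\<^sup>2 \<le> 2 * v\<^sup>2 + 2 * (\<tau> - v)\<^sup>2"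
      by (smt (verit) power2_diff power2_sum sum_squares_ge_zero zero_le_power2)
    moreover have "0 \<le> v\<^sup>2 * (\<tau> - v)\<^sup>2" by simp
    moreover have "2 * (1 + v\<^sup>2) * (1 + (\<tau> - v)\<^sup>2) = 2 + 2 * v\<^sup>2 + 2 * (\<tau> - v)\<^sup>2 + 2 * (v\<^sup>2 * (\<tau> - v)\<^sup>2)"
      by (simp add: algebra_simps)
    ultimately show ?thesis unfolding A_def B_def D_def by linarith
  qed
  have BA: "B \<le> 2 * A * D"
  proof -
    have "v\<^sup>2 \<le> 2 * \<tau>\<^sup>2 + 2 * (\<tau> - v)\<^sup>2"
      by (smt (verit) power2_diff power2_sum sum_squares_ge_zero zero_le_power2)
    moreover have "0 \<le> \<tau>\<^sup>2 * (\<tau> - v)\<^sup>2" by simp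
    moreover have "2 * (1 + \<tau>\<^sup>2) * (1 + (\<tau> - v)\<^sup>2) = 2 + 2 * \<tau>\<^sup>2 + 2 * (\<tau> - v)\<^sup>2 + 2 * (\<tau>\<^sup>2 * (\<tau> - v)\<^sup>2)"
      by (simp add: algebra_simps)
    ultimately show ?thesis unfolding A_def B_def D_def by linarith
  qed
  have QD: "Qf (\<tau> - v) = D powr (-1)" unfolding Qf_def D_def
    by (simp add: powr_minus_divide add_pos_nonneg)
  have QN: "Qf (\<tau> - v) ^ N = D powr (- real N)"
  proof -
    have "Qf (\<tau> - v) ^ N = (1 / D) ^ N" unfolding Qf_def D_def ..
    also have "\<dots> = (1 / D) powr (real N)" using D1 by (simp add: powr_realpow)
    also have "\<dots> = D powr (- real N)" using D1 by (simp add: powr_divide powr_minus_divide)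
    finally show ?thesis .
  qed
  have QN2: "D powr (- real N) \<le> D powr (-1 - \<bar>r\<bar>)"
    using D1 N by (intro powr_mono) auto
  have Ar: "A powr r \<le> 2 powr \<bar>r\<bar> * B powr r * D powr \<bar>r\<bar>"
  proof (cases "r \<ge> 0")
    case True
    have "A powr r \<le> (2 * B * D) powr r" using A1 AB True by (intro powr_mono2) auto
    also have "\<dots> = 2 powr \<bar>r\<bar> * B powr r * D powr \<bar>r\<bar>" using True by (simp add: powr_mult)
    finally show ?thesis .
  next
    case False
    have pos: "B / (2 * D) > 0" using B1 D1 by simp
    have "B / (2 * D) \<le> A" using BA D1 by (simp add: divide_le_eq mult_ac)
    then have "A powr r \<le> (B / (2 * D)) powr r" using False pos by (intro powr_mono2') auto
    also have "\<dots> = B powr r * (2 * D) powr (- r)"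
      using B1 D1 by (simp add: powr_divide powr_minus_divide)
    also have "\<dots> = 2 powr \<bar>r\<bar> * B powr r * D powr \<bar>r\<bar>" using False by (simp add: powr_mult)
    finally show ?thesis .
  qed
  have "(1 + \<tau>\<^sup>2) powr r * Qf (\<tau> - v) ^ N = A powr r * D powr (- real N)"
    unfolding QN A_def ..
  also have "\<dots> \<le> (2 powr \<bar>r\<bar> * B powr r * D powr \<bar>r\<bar>) * D powr (-1 - \<bar>r\<bar>)"
    using Ar QN2 by (intro mult_mono) auto
  also have "\<dots> = 2 powr \<bar>r\<bar> * B powr r * (D powr \<bar>r\<bar> * D powr (-1 - \<bar>r\<bar>))" by simp
  also have "D powr \<bar>r\<bar> * D powr (-1 - \<bar>r\<bar>) = D powr (-1)"
    by (simp add: powr_add[symmetric])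
  finally show ?thesis unfolding QD B_def by simp
qed

lemma Qf_cont: "continuous_on UNIV Qf"
proof -
  have p: "\<And>x::real. 1 + x\<^sup>2 \<noteq> 0" by (smt (verit) zero_le_power2)
  show ?thesis unfolding Qf_def using p by (intro continuous_intros) auto
qed
lemma wt_cont: "continuous_on UNIV wt" unfolding wt_def by (intro continuous_intros)
lemma rho_cont: "continuous_on UNIV rho" unfolding rho_def by (intro continuous_intros)

lemma Qf_meas[measurable]: "Qf \<in> borel_measurable borel"
  by (rule borel_measurable_continuous_onI[OF Qf_cont])
lemma wt_meas[measurable]: "wt \<in> borel_measurable borel"
  by (rule borel_measurable_continuous_onI[OF wt_cont])
lemma rho_meas[measurable]: "rho \<in> borel_measurable borel"
  by (rule borel_measurable_continuous_onI[OF rho_cont])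
lemma wtd_meas[measurable]: "wtd \<in> borel_measurable borel"
  by (rule borel_measurable_continuous_onI[OF wtd_cont])

definition Kf :: "real \<Rightarrow> nat \<Rightarrow> real \<Rightarrow> real \<Rightarrow> real" where
  "Kf C0 N \<tau> \<xi> = C0 * (Qf (\<tau> - wt \<xi>) ^ N + Qf (\<tau> + wt \<xi>) ^ N)"

lemma Kf_nonneg: "C0 \<ge> 0 \<Longrightarrow> Kf C0 N \<tau> \<xi> \<ge> 0"
  unfolding Kf_def using Qf_pos by (simp add: less_imp_le)

lemma Qf_sym: "Qf (- y) = Qf y" unfolding Qf_def by simp

lemma Kf_tau_int:
  assumes C0: "C0 \<ge> 0" and N: "real N \<ge> 1 + \<bar>r\<bar>"
  shows "(\<integral>\<^sup>+\<tau>. ennreal ((1 + \<tau>\<^sup>2) powr r * Kf C0 N \<tau> \<xi>) \<partial>lborel)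
     \<le> ennreal (C0 * 2 powr \<bar>r\<bar> * (1 + (wt \<xi>)\<^sup>2) powr r * (2 * pi))"
proof -
  define w where "w = wt \<xi>"
  define c where "c = C0 * 2 powr \<bar>r\<bar> * (1 + w\<^sup>2) powr r"
  have c0: "c \<ge> 0" unfolding c_def using C0 by simp
  have pt: "(1 + \<tau>\<^sup>2) powr r * Kf C0 N \<tau> \<xi> \<le> c * Qf (\<tau> - w) + c * Qf (\<tau> - (- w))" for \<tau>
  proof -
    have "(1 + \<tau>\<^sup>2) powr r * Kf C0 N \<tau> \<xi>
       = C0 * ((1 + \<tau>\<^sup>2) powr r * Qf (\<tau> - w) ^ N) + C0 * ((1 + \<tau>\<^sup>2) powr r * Qf (\<tau> - (- w)) ^ N)"
      unfolding Kf_def w_def by (simp add: algebra_simps)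
    also have "\<dots> \<le> C0 * (2 powr \<bar>r\<bar> * (1 + w\<^sup>2) powr r * Qf (\<tau> - w))
        + C0 * (2 powr \<bar>r\<bar> * (1 + (- w)\<^sup>2) powr r * Qf (\<tau> - (- w)))"
      using C0 by (intro add_mono mult_left_mono peetre N) auto
    also have "\<dots> = c * Qf (\<tau> - w) + c * Qf (\<tau> - (- w))" unfolding c_def by simp
    finally show ?thesis .
  qed
  have "(\<integral>\<^sup>+\<tau>. ennreal ((1 + \<tau>\<^sup>2) powr r * Kf C0 N \<tau> \<xi>) \<partial>lborel)
      \<le> (\<integral>\<^sup>+\<tau>. ennreal c * ennreal (Qf (\<tau> - w)) + ennreal c * ennreal (Qf (\<tau> - (- w))) \<partial>lborel)"
    using pt c0 Qf_pos
    by (intro nn_integral_mono) (simp add: ennreal_mult[symmetric] ennreal_plus[symmetric] less_imp_le del: ennreal_plus)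
  also have "\<dots> = ennreal c * (\<integral>\<^sup>+\<tau>. ennreal (Qf (\<tau> - w)) \<partial>lborel) + ennreal c * (\<integral>\<^sup>+\<tau>. ennreal (Qf (\<tau> - (- w))) \<partial>lborel)"
    by (simp add: nn_integral_add nn_integral_cmult)
  also have "\<dots> = ennreal (c * (2 * pi))"
    unfolding Q_shift_int using c0 by (simp add: ennreal_mult[symmetric] ennreal_plus[symmetric] del: ennreal_plus)
  finally show ?thesis unfolding c_def w_def by (simp add: mult_ac)
qed

lemma Kf_rho_int:
  assumes C0: "C0 \<ge> 0" and N: "N \<ge> 1"
  shows "(\<integral>\<^sup>+\<xi>. ennreal (Kf C0 N \<tau> \<xi> * rho \<xi>) \<partial>lborel) \<le> ennreal (C0 * (2 * pi))"
proof -
  have QN: "Qf y ^ N \<le> Qf y" for y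
    using power_decreasing[of 1 N "Qf y"] N Qf_pos[of y] Qf_le1[of y] by simp
  have pt: "Kf C0 N \<tau> \<xi> * rho \<xi> \<le> C0 * (Qf (wt \<xi> - \<tau>) * wtd \<xi>) + C0 * (Qf (wt \<xi> - (- \<tau>)) * wtd \<xi>)" for \<xi>
  proof -
    have e1: "Qf (\<tau> - wt \<xi>) = Qf (wt \<xi> - \<tau>)" using Qf_sym[of "wt \<xi> - \<tau>"] by simp
    have e2: "Qf (\<tau> + wt \<xi>) = Qf (wt \<xi> - (- \<tau>))" by (simp add: add.commute)
    have "Kf C0 N \<tau> \<xi> * rho \<xi> \<le> C0 * (Qf (\<tau> - wt \<xi>) + Qf (\<tau> + wt \<xi>)) * rho \<xi>"
      unfolding Kf_def using C0 rho_pos[of \<xi>] by (intro mult_right_mono mult_left_mono add_mono QN) auto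
    also have "\<dots> \<le> C0 * (Qf (\<tau> - wt \<xi>) + Qf (\<tau> + wt \<xi>)) * wtd \<xi>"
      using C0 Qf_pos rho_le_wtd by (intro mult_left_mono) (auto simp: less_imp_le intro: add_nonneg_nonneg)
    finally show ?thesis unfolding e1 e2 by (simp add: algebra_simps)
  qed
  have nn: "0 \<le> wtd \<xi>" for \<xi> using rho_le_wtd[of \<xi>] rho_pos[of \<xi>] by simp
  have "(\<integral>\<^sup>+\<xi>. ennreal (Kf C0 N \<tau> \<xi> * rho \<xi>) \<partial>lborel)
      \<le> (\<integral>\<^sup>+\<xi>. ennreal C0 * ennreal (Qf (wt \<xi> - \<tau>) * wtd \<xi>) + ennreal C0 * ennreal (Qf (wt \<xi> - (- \<tau>)) * wtd \<xi>) \<partial>lborel)"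
    using pt C0 Qf_pos nn
    by (intro nn_integral_mono) (simp add: ennreal_mult[symmetric] ennreal_plus[symmetric] less_imp_le del: ennreal_plus)
  also have "\<dots> = ennreal C0 * (\<integral>\<^sup>+\<xi>. ennreal (Qf (wt \<xi> - \<tau>) * wtd \<xi>) \<partial>lborel) + ennreal C0 * (\<integral>\<^sup>+\<xi>. ennreal (Qf (wt \<xi> - (- \<tau>)) * wtd \<xi>) \<partial>lborel)"
    by (simp add: nn_integral_add nn_integral_cmult)
  also have "\<dots> = ennreal (C0 * (2 * pi))"
    unfolding Q_wt_int using C0 by (simp add: ennreal_mult[symmetric] ennreal_plus[symmetric] del: ennreal_plus)
  finally show ?thesis .
qed

lemma afun_nonneg: "afun fh gh \<xi> \<ge> 0" unfolding afun_def by simp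

lemma tFT_bound:
  assumes c: "continuous_on UNIV \<eta>" and z: "\<And>t. \<bar>t\<bar> > 2 \<Longrightarrow> \<eta> t = 0"
    and dec: "\<And>\<sigma>. cmod (FT \<eta> \<sigma>) \<le> C0 * Qf \<sigma> ^ N"
  shows "ennreal (cmod (time_FT \<eta> mlt fh gh x \<tau>))
    \<le> ennreal (1 / (2 * pi)) * (\<integral>\<^sup>+\<xi>. ennreal (cmod (mlt \<xi>) * afun fh gh \<xi> * Kf C0 N \<tau> \<xi>) \<partial>lborel)"
proof -
  define F where "F \<xi> = exp (\<i> * complex_of_real (x * \<xi>)) * mlt \<xi> *
        (\<integral>t. complex_of_real (\<eta> t) * WR_hat fh gh t \<xi> * exp (- \<i> * complex_of_real (t * \<tau>)) \<partial>lborel)" for \<xi>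
  have tf: "time_FT \<eta> mlt fh gh x \<tau> = complex_of_real (1 / (2 * pi)) * integral\<^sup>L lborel F"
    unfolding time_FT_def F_def ..
  have nI: "ennreal (cmod (integral\<^sup>L lborel F)) \<le> (\<integral>\<^sup>+\<xi>. ennreal (cmod (F \<xi>)) \<partial>lborel)"
  proof (cases "integrable lborel F")
    case True then show ?thesis by (rule integral_norm_bound_ennreal)
  next
    case False then show ?thesis by (simp add: not_integrable_integral_eq)
  qed
  have pw: "cmod (F \<xi>) \<le> cmod (mlt \<xi>) * afun fh gh \<xi> * Kf C0 N \<tau> \<xi>" for \<xi>
  proof -
    have "cmod (F \<xi>) = cmod (mlt \<xi>) * cmod (\<integral>t. complex_of_real (\<eta> t) * WR_hat fh gh t \<xi> * exp (- \<i> * complex_of_real (t * \<tau>)) \<partial>lborel)"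
      unfolding F_def by (simp add: norm_mult)
    also have "\<dots> \<le> cmod (mlt \<xi>) * (afun fh gh \<xi> * (cmod (FT \<eta> (\<tau> - wt \<xi>)) + cmod (FT \<eta> (\<tau> + wt \<xi>))))"
      by (intro mult_left_mono A_bound[OF c z]) auto
    also have "\<dots> \<le> cmod (mlt \<xi>) * (afun fh gh \<xi> * Kf C0 N \<tau> \<xi>)"
      unfolding Kf_def using afun_nonneg
      by (intro mult_left_mono) (auto intro!: add_mono dec simp: distrib_left)
    finally show ?thesis by (simp add: mult_ac)
  qed
  have "ennreal (cmod (time_FT \<eta> mlt fh gh x \<tau>)) = ennreal (1 / (2 * pi)) * ennreal (cmod (integral\<^sup>L lborel F))"
  proof -
    have pos: "0 < 1 / (2 * pi)" by simp
    show ?thesis unfolding tf norm_mult norm_of_real abs_of_pos[OF pos] by (rule ennreal_mult) auto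
  qed
  also have "\<dots> \<le> ennreal (1 / (2 * pi)) * (\<integral>\<^sup>+\<xi>. ennreal (cmod (F \<xi>)) \<partial>lborel)"
    by (intro mult_left_mono nI) auto
  also have "\<dots> \<le> ennreal (1 / (2 * pi)) * (\<integral>\<^sup>+\<xi>. ennreal (cmod (mlt \<xi>) * afun fh gh \<xi> * Kf C0 N \<tau> \<xi>) \<partial>lborel)"
    by (intro mult_left_mono nn_integral_mono ennreal_leI pw) auto
  finally show ?thesis .
qed

lemma CS_step:
  assumes C0: "C0 \<ge> 0" and N: "N \<ge> 1"
    and [measurable]: "fh \<in> borel_measurable lborel" "gh \<in> borel_measurable lborel" "mlt \<in> borel_measurable lborel"
  shows "(\<integral>\<^sup>+\<xi>. ennreal (cmod (mlt \<xi>) * afun fh gh \<xi> * Kf C0 N \<tau> \<xi>) \<partial>lborel)\<^sup>2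
    \<le> (\<integral>\<^sup>+\<xi>. ennreal ((cmod (mlt \<xi>))\<^sup>2 * (afun fh gh \<xi>)\<^sup>2 * Kf C0 N \<tau> \<xi> / rho \<xi>) \<partial>lborel) * ennreal (C0 * (2 * pi))"
proof -
  define m where "m \<xi> = cmod (mlt \<xi>)" for \<xi>
  define a where "a \<xi> = afun fh gh \<xi>" for \<xi>
  define K where "K \<xi> = Kf C0 N \<tau> \<xi>" for \<xi>
  have [measurable]: "m \<in> borel_measurable lborel" unfolding m_def by measurable
  have [measurable]: "a \<in> borel_measurable lborel" unfolding a_def afun_def by measurable
  have [measurable]: "K \<in> borel_measurable lborel" unfolding K_def Kf_def by measurable
  have K0: "K \<xi> \<ge> 0" for \<xi> unfolding K_def using Kf_nonneg[OF C0] .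
  have a0: "a \<xi> \<ge> 0" for \<xi> unfolding a_def using afun_nonneg .
  have r0: "rho \<xi> > 0" for \<xi> by (rule rho_pos)
  define f where "f \<xi> = ennreal (m \<xi> * a \<xi> * sqrt (K \<xi> / rho \<xi>))" for \<xi>
  define g where "g \<xi> = ennreal (sqrt (K \<xi> * rho \<xi>))" for \<xi>
  have [measurable]: "f \<in> borel_measurable lborel" unfolding f_def by measurable
  have [measurable]: "g \<in> borel_measurable lborel" unfolding g_def by measurable
  have fg: "f \<xi> * g \<xi> = ennreal (m \<xi> * a \<xi> * K \<xi>)" for \<xi>
  proof -
    have e: "sqrt (K \<xi> / rho \<xi>) * sqrt (K \<xi> * rho \<xi>) = K \<xi>"
      using K0[of \<xi>] r0[of \<xi>] by (simp add: real_sqrt_mult[symmetric])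
    have "f \<xi> * g \<xi> = ennreal (m \<xi> * a \<xi> * sqrt (K \<xi> / rho \<xi>) * sqrt (K \<xi> * rho \<xi>))"
      unfolding f_def g_def using a0[of \<xi>] K0[of \<xi>] r0[of \<xi>]
      by (intro ennreal_mult[symmetric]) (auto simp: m_def)
    also have "\<dots> = ennreal (m \<xi> * a \<xi> * K \<xi>)" by (simp only: mult.assoc e)
    finally show ?thesis .
  qed
  have f2: "f \<xi> ^ 2 = ennreal ((m \<xi>)\<^sup>2 * (a \<xi>)\<^sup>2 * K \<xi> / rho \<xi>)" for \<xi>
  proof -
    have "f \<xi> ^ 2 = ennreal ((m \<xi> * a \<xi> * sqrt (K \<xi> / rho \<xi>)) ^ 2)"
      unfolding f_def using a0[of \<xi>] K0[of \<xi>] r0[of \<xi>] by (intro ennreal_power) (auto simp: m_def less_imp_le)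
    also have "(m \<xi> * a \<xi> * sqrt (K \<xi> / rho \<xi>)) ^ 2 = (m \<xi>)\<^sup>2 * (a \<xi>)\<^sup>2 * (K \<xi> / rho \<xi>)"
      using K0[of \<xi>] r0[of \<xi>] by (simp add: power_mult_distrib)
    finally show ?thesis by simp
  qed
  have g2: "g \<xi> ^ 2 = ennreal (K \<xi> * rho \<xi>)" for \<xi>
  proof -
    have "g \<xi> ^ 2 = ennreal ((sqrt (K \<xi> * rho \<xi>)) ^ 2)"
      unfolding g_def using K0[of \<xi>] r0[of \<xi>] by (intro ennreal_power) (auto simp: less_imp_le)
    also have "(sqrt (K \<xi> * rho \<xi>)) ^ 2 = K \<xi> * rho \<xi>"
      using K0[of \<xi>] r0[of \<xi>] by simp
    finally show ?thesis .
  qed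
  have "(\<integral>\<^sup>+\<xi>. ennreal (m \<xi> * a \<xi> * K \<xi>) \<partial>lborel)\<^sup>2 = (\<integral>\<^sup>+\<xi>. f \<xi> * g \<xi> \<partial>lborel)\<^sup>2"
    unfolding fg ..
  also have "\<dots> \<le> (\<integral>\<^sup>+\<xi>. f \<xi> ^ 2 \<partial>lborel) * (\<integral>\<^sup>+\<xi>. g \<xi> ^ 2 \<partial>lborel)"
    by (rule Cauchy_Schwarz_nn_integral) measurable
  also have "\<dots> \<le> (\<integral>\<^sup>+\<xi>. ennreal ((m \<xi>)\<^sup>2 * (a \<xi>)\<^sup>2 * K \<xi> / rho \<xi>) \<partial>lborel) * ennreal (C0 * (2 * pi))"
    unfolding f2 g2 K_def by (intro mult_left_mono Kf_rho_int[OF C0 N]) auto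
  finally show ?thesis unfolding m_def a_def K_def .
qed

lemma sq_step:
  assumes c: "continuous_on UNIV \<eta>" and z: "\<And>t. \<bar>t\<bar> > 2 \<Longrightarrow> \<eta> t = 0"
    and dec: "\<And>\<sigma>. cmod (FT \<eta> \<sigma>) \<le> C0 * Qf \<sigma> ^ N"
    and C0: "C0 \<ge> 0" and N: "N \<ge> 1"
    and [measurable]: "fh \<in> borel_measurable lborel" "gh \<in> borel_measurable lborel" "mlt \<in> borel_measurable lborel"
  shows "ennreal ((cmod (time_FT \<eta> mlt fh gh x \<tau>))\<^sup>2)
    \<le> ennreal (C0 / (2 * pi)) * (\<integral>\<^sup>+\<xi>. ennreal ((cmod (mlt \<xi>))\<^sup>2 * (afun fh gh \<xi>)\<^sup>2 * Kf C0 N \<tau> \<xi> / rho \<xi>) \<partial>lborel)"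
proof -
  define S where "S = (\<integral>\<^sup>+\<xi>. ennreal (cmod (mlt \<xi>) * afun fh gh \<xi> * Kf C0 N \<tau> \<xi>) \<partial>lborel)"
  define P where "P = (\<integral>\<^sup>+\<xi>. ennreal ((cmod (mlt \<xi>))\<^sup>2 * (afun fh gh \<xi>)\<^sup>2 * Kf C0 N \<tau> \<xi> / rho \<xi>) \<partial>lborel)"
  have "ennreal ((cmod (time_FT \<eta> mlt fh gh x \<tau>))\<^sup>2) = (ennreal (cmod (time_FT \<eta> mlt fh gh x \<tau>)))\<^sup>2"
    by (simp add: ennreal_power)
  also have "\<dots> \<le> (ennreal (1 / (2 * pi)) * S)\<^sup>2"
    unfolding S_def by (intro power_mono tFT_bound[OF c z dec]) auto
  also have "\<dots> = (ennreal (1 / (2 * pi)))\<^sup>2 * S\<^sup>2" by (simp add: power_mult_distrib)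
  also have "\<dots> \<le> (ennreal (1 / (2 * pi)))\<^sup>2 * (P * ennreal (C0 * (2 * pi)))"
    unfolding S_def P_def by (intro mult_left_mono CS_step[OF C0 N]) auto
  also have "\<dots> = ennreal ((1 / (2 * pi))\<^sup>2 * (C0 * (2 * pi))) * P"
    using C0 by (simp add: ennreal_power ennreal_mult mult_ac)
  also have "(1 / (2 * pi))\<^sup>2 * (C0 * (2 * pi)) = C0 / (2 * pi)"
    by (simp add: power2_eq_square field_simps)
  finally show ?thesis unfolding P_def by (simp add: mult_ac)
qed

lemma main_bound:
  assumes c: "continuous_on UNIV \<eta>" and z: "\<And>t. \<bar>t\<bar> > 2 \<Longrightarrow> \<eta> t = 0"
    and dec: "\<And>\<sigma>. cmod (FT \<eta> \<sigma>) \<le> C0 * Qf \<sigma> ^ N"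
    and C0: "C0 \<ge> 0" and N: "N \<ge> 1" and Nr: "real N \<ge> 1 + \<bar>r\<bar>"
    and [measurable]: "fh \<in> borel_measurable lborel" "gh \<in> borel_measurable lborel" "mlt \<in> borel_measurable lborel"
  shows "time_Hs_sq r \<eta> mlt fh gh x
    \<le> ennreal (C0\<^sup>2 * 2 powr \<bar>r\<bar>) * (\<integral>\<^sup>+\<xi>. ennreal ((cmod (mlt \<xi>))\<^sup>2 * (afun fh gh \<xi>)\<^sup>2 * (1 + (wt \<xi>)\<^sup>2) powr r / rho \<xi>) \<partial>lborel)"
proof -
  define B where "B \<xi> = (cmod (mlt \<xi>))\<^sup>2 * (afun fh gh \<xi>)\<^sup>2 / rho \<xi>" for \<xi>
  define G where "G \<tau> \<xi> = ennreal ((1 + \<tau>\<^sup>2) powr r * Kf C0 N \<tau> \<xi>) * ennreal (B \<xi>)" for \<tau> \<xi>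
  have [measurable]: "B \<in> borel_measurable lborel" unfolding B_def afun_def by measurable
  have Gm[measurable]: "(\<lambda>(\<xi>, \<tau>). G \<tau> \<xi>) \<in> borel_measurable (lborel \<Otimes>\<^sub>M lborel)"
    unfolding G_def Kf_def by measurable
  have Gm1[measurable]: "G \<tau> \<in> borel_measurable lborel" for \<tau>
    unfolding G_def Kf_def by measurable
  have B0: "B \<xi> \<ge> 0" for \<xi> unfolding B_def using rho_pos[of \<xi>] by simp
  have K0: "Kf C0 N \<tau> \<xi> \<ge> 0" for \<tau> \<xi> using Kf_nonneg[OF C0] .
  have inner: "ennreal ((1 + \<tau>\<^sup>2) powr r) * (ennreal (C0 / (2 * pi)) *
       (\<integral>\<^sup>+\<xi>. ennreal ((cmod (mlt \<xi>))\<^sup>2 * (afun fh gh \<xi>)\<^sup>2 * Kf C0 N \<tau> \<xi> / rho \<xi>) \<partial>lborel))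
     = ennreal (C0 / (2 * pi)) * (\<integral>\<^sup>+\<xi>. G \<tau> \<xi> \<partial>lborel)" for \<tau>
  proof -
    have "(\<integral>\<^sup>+\<xi>. G \<tau> \<xi> \<partial>lborel) = (\<integral>\<^sup>+\<xi>. ennreal ((1 + \<tau>\<^sup>2) powr r) *
        ennreal ((cmod (mlt \<xi>))\<^sup>2 * (afun fh gh \<xi>)\<^sup>2 * Kf C0 N \<tau> \<xi> / rho \<xi>) \<partial>lborel)"
    proof (rule nn_integral_cong)
      fix \<xi>
      have "(1 + \<tau>\<^sup>2) powr r * Kf C0 N \<tau> \<xi> * B \<xi> =
          (1 + \<tau>\<^sup>2) powr r * ((cmod (mlt \<xi>))\<^sup>2 * (afun fh gh \<xi>)\<^sup>2 * Kf C0 N \<tau> \<xi> / rho \<xi>)"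
        unfolding B_def by (simp add: field_simps)
      then show "G \<tau> \<xi> = ennreal ((1 + \<tau>\<^sup>2) powr r) *
          ennreal ((cmod (mlt \<xi>))\<^sup>2 * (afun fh gh \<xi>)\<^sup>2 * Kf C0 N \<tau> \<xi> / rho \<xi>)"
        unfolding G_def using K0[of \<tau> \<xi>] B0[of \<xi>] rho_pos[of \<xi>]
        by (simp add: ennreal_mult[symmetric] less_imp_le)
    qed
    also have "\<dots> = ennreal ((1 + \<tau>\<^sup>2) powr r) *
        (\<integral>\<^sup>+\<xi>. ennreal ((cmod (mlt \<xi>))\<^sup>2 * (afun fh gh \<xi>)\<^sup>2 * Kf C0 N \<tau> \<xi> / rho \<xi>) \<partial>lborel)"
      by (rule nn_integral_cmult) (unfold afun_def Kf_def, measurable)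
    finally show ?thesis by (simp add: mult_ac)
  qed
  have "time_Hs_sq r \<eta> mlt fh gh x
      = (\<integral>\<^sup>+\<tau>. ennreal ((1 + \<tau>\<^sup>2) powr r) * ennreal ((cmod (time_FT \<eta> mlt fh gh x \<tau>))\<^sup>2) \<partial>lborel)"
    unfolding time_Hs_sq_def by (intro nn_integral_cong) (simp add: ennreal_mult)
  also have "\<dots> \<le> (\<integral>\<^sup>+\<tau>. ennreal (C0 / (2 * pi)) * (\<integral>\<^sup>+\<xi>. G \<tau> \<xi> \<partial>lborel) \<partial>lborel)"
    unfolding inner[symmetric]
    by (intro nn_integral_mono mult_left_mono sq_step[OF c z dec C0 N]) auto
  also have "\<dots> = ennreal (C0 / (2 * pi)) * (\<integral>\<^sup>+\<tau>. (\<integral>\<^sup>+\<xi>. G \<tau> \<xi> \<partial>lborel) \<partial>lborel)"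
    by (rule nn_integral_cmult) measurable
  also have "(\<integral>\<^sup>+\<tau>. (\<integral>\<^sup>+\<xi>. G \<tau> \<xi> \<partial>lborel) \<partial>lborel) = (\<integral>\<^sup>+\<xi>. (\<integral>\<^sup>+\<tau>. G \<tau> \<xi> \<partial>lborel) \<partial>lborel)"
    by (rule lborel_pair.Fubini'[of "\<lambda>\<xi> \<tau>. G \<tau> \<xi>"]) (use Gm in simp)
  also have "\<dots> \<le> (\<integral>\<^sup>+\<xi>. ennreal (C0 * 2 powr \<bar>r\<bar> * (2 * pi)) * ennreal ((1 + (wt \<xi>)\<^sup>2) powr r * B \<xi>) \<partial>lborel)"
  proof (rule nn_integral_mono)
    fix \<xi>
    have "(\<integral>\<^sup>+\<tau>. G \<tau> \<xi> \<partial>lborel) = (\<integral>\<^sup>+\<tau>. ennreal ((1 + \<tau>\<^sup>2) powr r * Kf C0 N \<tau> \<xi>) \<partial>lborel) * ennreal (B \<xi>)"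
      unfolding G_def by (rule nn_integral_multc) (unfold Kf_def, measurable)
    also have "\<dots> \<le> ennreal (C0 * 2 powr \<bar>r\<bar> * (1 + (wt \<xi>)\<^sup>2) powr r * (2 * pi)) * ennreal (B \<xi>)"
      by (intro mult_right_mono Kf_tau_int[OF C0 Nr]) auto
    also have "\<dots> = ennreal (C0 * 2 powr \<bar>r\<bar> * (2 * pi)) * ennreal ((1 + (wt \<xi>)\<^sup>2) powr r * B \<xi>)"
      using C0 B0[of \<xi>] by (simp add: ennreal_mult[symmetric] mult_ac)
    finally show "(\<integral>\<^sup>+\<tau>. G \<tau> \<xi> \<partial>lborel) \<le> \<dots>" .
  qed
  also have "\<dots> = ennreal (C0 * 2 powr \<bar>r\<bar> * (2 * pi)) * (\<integral>\<^sup>+\<xi>. ennreal ((1 + (wt \<xi>)\<^sup>2) powr r * B \<xi>) \<partial>lborel)"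
    by (rule nn_integral_cmult) measurable
  finally have "time_Hs_sq r \<eta> mlt fh gh x \<le> ennreal (C0 / (2 * pi)) * (ennreal (C0 * 2 powr \<bar>r\<bar> * (2 * pi)) *
      (\<integral>\<^sup>+\<xi>. ennreal ((1 + (wt \<xi>)\<^sup>2) powr r * B \<xi>) \<partial>lborel))"
    by (simp add: mult_left_mono)
  also have "\<dots> = ennreal (C0\<^sup>2 * 2 powr \<bar>r\<bar>) * (\<integral>\<^sup>+\<xi>. ennreal ((1 + (wt \<xi>)\<^sup>2) powr r * B \<xi>) \<partial>lborel)"
  proof -
    have "C0 / (2 * pi) * (C0 * 2 powr \<bar>r\<bar> * (2 * pi)) = C0\<^sup>2 * 2 powr \<bar>r\<bar>"
      by (simp add: power2_eq_square field_simps)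
    then show ?thesis using C0 by (simp add: ennreal_mult[symmetric] mult.assoc[symmetric])
  qed
  also have "(\<integral>\<^sup>+\<xi>. ennreal ((1 + (wt \<xi>)\<^sup>2) powr r * B \<xi>) \<partial>lborel)
     = (\<integral>\<^sup>+\<xi>. ennreal ((cmod (mlt \<xi>))\<^sup>2 * (afun fh gh \<xi>)\<^sup>2 * (1 + (wt \<xi>)\<^sup>2) powr r / rho \<xi>) \<partial>lborel)"
    unfolding B_def by (intro nn_integral_cong) (simp add: field_simps)
  finally show ?thesis .
qed

lemma W_bound: "(1 + (wt \<xi>)\<^sup>2) powr r \<le> 2 powr \<bar>r\<bar> * (1 + \<xi>\<^sup>2) powr (2 * r)"
proof -
  define L where "L = 1 + \<xi>\<^sup>2"
  define W where "W = 1 + (wt \<xi>)\<^sup>2"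
  have L1: "L \<ge> 1" unfolding L_def by simp
  have sq: "(sqrt (1 + \<xi>\<^sup>2))\<^sup>2 = 1 + \<xi>\<^sup>2"
    by (rule real_sqrt_pow2) (simp add: add_nonneg_nonneg)
  have We: "W = 1 + \<xi>\<^sup>2 + \<xi>\<^sup>2 * \<xi>\<^sup>2" unfolding W_def wt_def power_mult_distrib sq
    by (simp add: algebra_simps)
  have Le: "L\<^sup>2 = 1 + 2 * \<xi>\<^sup>2 + \<xi>\<^sup>2 * \<xi>\<^sup>2" unfolding L_def by (simp add: power2_eq_square algebra_simps)
  have q: "0 \<le> \<xi>\<^sup>2 * \<xi>\<^sup>2" "0 \<le> \<xi>\<^sup>2" by simp_all
  have gen1: "\<And>a b::real. 0 \<le> a \<Longrightarrow> 0 \<le> b \<Longrightarrow> 1 + 2*a + b \<le> 2*(1+a+b)"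
    by simp
  have gen2: "\<And>a b::real. 0 \<le> a \<Longrightarrow> 0 \<le> b \<Longrightarrow> 1 + a + b \<le> 1 + 2*a + b"
    by simp
  have Wu: "W \<le> L\<^sup>2" unfolding We Le by (rule gen2[OF q(2) q(1)])
  have "L\<^sup>2 \<le> 2 * W" unfolding We Le by (rule gen1[OF q(2) q(1)])
  then have Wl: "L\<^sup>2 / 2 \<le> W" by linarith
  have W1: "W \<ge> 1" unfolding We by simp
  have l2: "L\<^sup>2 = L powr 2" using L1 by (subst powr_numeral) auto
  have L2: "L\<^sup>2 powr r = L powr (2 * r)" unfolding l2 powr_powr by simp
  have g1: "1 \<le> 2 powr \<bar>r\<bar>" by (rule ge_one_powr_ge_zero) auto
  show ?thesis
  proof (cases "r \<ge> 0")
    case True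
    have "W powr r \<le> (L\<^sup>2) powr r" using True W1 Wu by (intro powr_mono2) auto
    also have "\<dots> \<le> 2 powr \<bar>r\<bar> * (L\<^sup>2) powr r"
      using mult_right_mono[OF g1, of "(L\<^sup>2) powr r"] by simp
    also have "\<dots> = 2 powr \<bar>r\<bar> * L powr (2 * r)" by (simp only: L2)
    finally show ?thesis unfolding W_def L_def .
  next
    case False
    have "W powr r \<le> (L\<^sup>2 / 2) powr r" using False W1 Wl L1 by (intro powr_mono2') auto
    also have "\<dots> = (L\<^sup>2) powr r / 2 powr r" by (rule powr_divide)
    also have "\<dots> = 2 powr (- r) * (L\<^sup>2) powr r" by (simp add: powr_minus_divide)
    also have "\<dots> = 2 powr \<bar>r\<bar> * (L\<^sup>2) powr r" using False by simp
    also have "\<dots> = 2 powr \<bar>r\<bar> * L powr (2 * r)" by (simp only: L2)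
    finally show ?thesis unfolding W_def L_def .
  qed
qed

lemma sq_le2: "(x + y)\<^sup>2 \<le> 2 * x\<^sup>2 + 2 * y\<^sup>2" for x y :: real
  by (smt (verit) power2_diff power2_sum zero_le_power2)

lemma afun_sq: "(afun fh gh \<xi>)\<^sup>2 \<le> 2 * (cmod (fh \<xi>))\<^sup>2 + 2 * ((cmod (gh \<xi>))\<^sup>2 / (1 + \<xi>\<^sup>2))"
proof -
  have e: "(cmod (gh \<xi>) / sqrt (1 + \<xi>\<^sup>2))\<^sup>2 = (cmod (gh \<xi>))\<^sup>2 / (1 + \<xi>\<^sup>2)"
    by (simp add: power_divide add_pos_nonneg)
  show ?thesis unfolding afun_def e[symmetric] by (rule sq_le2)
qed

lemma geq: "((c::real) * P) * (2 * F + 2 * (G / L)) = (2 * c) * (P * F) + (2 * c) * ((P / L) * G)"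
  by (simp add: distrib_left mult_ac)
lemma geq2: "(M::real) * A * W / R = (M * W / R) * A"
  by simp

lemma Hs_int_bound:
  assumes wgt: "\<And>\<xi>. (cmod (mlt \<xi>))\<^sup>2 * (1 + (wt \<xi>)\<^sup>2) powr r / rho \<xi> \<le> 2 powr \<bar>r\<bar> * (1 + \<xi>\<^sup>2) powr s"
    and [measurable]: "fh \<in> borel_measurable lborel" "gh \<in> borel_measurable lborel"
  shows "(\<integral>\<^sup>+\<xi>. ennreal ((cmod (mlt \<xi>))\<^sup>2 * (afun fh gh \<xi>)\<^sup>2 * (1 + (wt \<xi>)\<^sup>2) powr r / rho \<xi>) \<partial>lborel)
     \<le> ennreal (2 * 2 powr \<bar>r\<bar>) * (Hs_sq s fh + Hs_sq (s - 1) gh)"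
proof -
  have pt: "(cmod (mlt \<xi>))\<^sup>2 * (afun fh gh \<xi>)\<^sup>2 * (1 + (wt \<xi>)\<^sup>2) powr r / rho \<xi>
     \<le> (2 * 2 powr \<bar>r\<bar>) * ((1 + \<xi>\<^sup>2) powr s * (cmod (fh \<xi>))\<^sup>2) + (2 * 2 powr \<bar>r\<bar>) * ((1 + \<xi>\<^sup>2) powr (s - 1) * (cmod (gh \<xi>))\<^sup>2)" for \<xi>
  proof -
    define L where "L = 1 + \<xi>\<^sup>2"
    have L1: "L \<ge> 1" unfolding L_def by simp
    have "(cmod (mlt \<xi>))\<^sup>2 * (afun fh gh \<xi>)\<^sup>2 * (1 + (wt \<xi>)\<^sup>2) powr r / rho \<xi>
        = ((cmod (mlt \<xi>))\<^sup>2 * (1 + (wt \<xi>)\<^sup>2) powr r / rho \<xi>) * (afun fh gh \<xi>)\<^sup>2" by (rule geq2)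
    also have "\<dots> \<le> (2 powr \<bar>r\<bar> * L powr s) * (2 * (cmod (fh \<xi>))\<^sup>2 + 2 * ((cmod (gh \<xi>))\<^sup>2 / L))"
      unfolding L_def by (intro mult_mono wgt afun_sq) auto
    also have "\<dots> = (2 * 2 powr \<bar>r\<bar>) * (L powr s * (cmod (fh \<xi>))\<^sup>2) + (2 * 2 powr \<bar>r\<bar>) * ((L powr s / L) * (cmod (gh \<xi>))\<^sup>2)"
      by (rule geq)
    also have "L powr s / L = L powr (s - 1)" using L1 by (simp add: powr_diff)
    finally show ?thesis unfolding L_def .
  qed
  have "(\<integral>\<^sup>+\<xi>. ennreal ((cmod (mlt \<xi>))\<^sup>2 * (afun fh gh \<xi>)\<^sup>2 * (1 + (wt \<xi>)\<^sup>2) powr r / rho \<xi>) \<partial>lborel)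
     \<le> (\<integral>\<^sup>+\<xi>. ennreal (2 * 2 powr \<bar>r\<bar>) * ennreal ((1 + \<xi>\<^sup>2) powr s * (cmod (fh \<xi>))\<^sup>2)
          + ennreal (2 * 2 powr \<bar>r\<bar>) * ennreal ((1 + \<xi>\<^sup>2) powr (s - 1) * (cmod (gh \<xi>))\<^sup>2) \<partial>lborel)"
    by (intro nn_integral_mono) (use pt in \<open>simp add: ennreal_mult[symmetric] ennreal_plus[symmetric] del: ennreal_plus\<close>)
  also have "\<dots> = ennreal (2 * 2 powr \<bar>r\<bar>) * Hs_sq s fh + ennreal (2 * 2 powr \<bar>r\<bar>) * Hs_sq (s - 1) gh"
    unfolding Hs_sq_def by (simp add: nn_integral_add nn_integral_cmult)
  also have "\<dots> = ennreal (2 * 2 powr \<bar>r\<bar>) * (Hs_sq s fh + Hs_sq (s - 1) gh)"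
    by (simp add: distrib_left)
  finally show ?thesis .
qed

lemma wgt_gen:
  assumes m: "0 \<le> m2" "m2 \<le> (1 + \<xi>\<^sup>2) powr e" and rs: "2 * r + e - 1/2 = s"
  shows "m2 * (1 + (wt \<xi>)\<^sup>2) powr r / rho \<xi> \<le> 2 powr \<bar>r\<bar> * (1 + \<xi>\<^sup>2) powr s"
proof -
  define L where "L = 1 + \<xi>\<^sup>2"
  have L1: "L \<ge> 1" unfolding L_def by simp
  have rho: "rho \<xi> = L powr (1/2)" unfolding rho_def L_def using L1 unfolding L_def
    by (simp add: powr_half_sqrt)
  have "m2 * (1 + (wt \<xi>)\<^sup>2) powr r \<le> L powr e * (2 powr \<bar>r\<bar> * L powr (2 * r))"
    unfolding L_def using m by (intro mult_mono W_bound) auto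
  also have "\<dots> = 2 powr \<bar>r\<bar> * (L powr (2 * r + e - 1/2) * L powr (1/2))"
    using L1 by (simp add: powr_add[symmetric] ac_simps)
  finally have "m2 * (1 + (wt \<xi>)\<^sup>2) powr r \<le> (2 powr \<bar>r\<bar> * L powr s) * rho \<xi>"
    unfolding rs rho by (simp add: mult_ac)
  moreover have "rho \<xi> > 0" by (rule rho_pos)
  ultimately show ?thesis unfolding L_def by (simp add: divide_le_eq)
qed

lemma Hs_sq_eq: "in_Hs s fh \<Longrightarrow> Hs_sq s fh = ennreal ((Hs_norm s fh)\<^sup>2)"
  unfolding in_Hs_def Hs_norm_def by (simp add: ennreal_enn2real less_top[symmetric])

lemma sum_bound:
  assumes "in_Hs s fh" "in_Hs (s - 1) gh"
  shows "Hs_sq s fh + Hs_sq (s - 1) gh \<le> ennreal ((Hs_norm s fh + Hs_norm (s - 1) gh)\<^sup>2)"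
proof -
  have n0: "Hs_norm s fh \<ge> 0" "Hs_norm (s - 1) gh \<ge> 0" unfolding Hs_norm_def by simp_all
  have "Hs_sq s fh + Hs_sq (s - 1) gh = ennreal ((Hs_norm s fh)\<^sup>2 + (Hs_norm (s - 1) gh)\<^sup>2)"
    using assms by (simp add: Hs_sq_eq ennreal_plus)
  also have "\<dots> \<le> ennreal ((Hs_norm s fh + Hs_norm (s - 1) gh)\<^sup>2)"
    using n0 by (intro ennreal_leI) (simp add: power2_sum)
  finally show ?thesis .
qed

lemma r1_bound: "\<bar>(2 * s + 1) / 4\<bar> \<le> \<bar>s\<bar> / 2 + 1/(4::real)"
proof -
  have a: "\<bar>2 * s+1\<bar> \<le> 2 * \<bar>s\<bar> + 1" using abs_triangle_ineq[of "2 * s" 1] by (simp add: abs_mult)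
  have "\<bar>(2 * s + 1) / 4\<bar> = \<bar>2 * s+1\<bar> / 4" by simp
  also have "\<dots> \<le> (2 * \<bar>s\<bar> + 1) / 4" using a by (intro divide_right_mono) auto
  also have "\<dots> = \<bar>s\<bar> / 2 + 1/4" by simp
  finally show ?thesis .
qed
lemma r2_bound: "\<bar>(2 * s - 1) / 4\<bar> \<le> \<bar>s\<bar> / 2 + 1/(4::real)"
proof -
  have a: "\<bar>2 * s-1\<bar> \<le> 2 * \<bar>s\<bar> + 1" using abs_triangle_ineq4[of "2 * s" 1] by (simp add: abs_mult)
  have "\<bar>(2 * s - 1) / 4\<bar> = \<bar>2 * s-1\<bar> / 4" by simp
  also have "\<dots> \<le> (2 * \<bar>s\<bar> + 1) / 4" using a by (intro divide_right_mono) auto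
  also have "\<dots> = \<bar>s\<bar> / 2 + 1/4" by simp
  finally show ?thesis .
qed

theorem lemma4p1:
  fixes \<eta> :: "real \<Rightarrow> real" and s :: real
  assumes "is_cutoff \<eta>"
  shows "\<exists>C. \<forall>fh gh. in_Hs s fh \<longrightarrow> in_Hs (s - 1) gh \<longrightarrow>
      (AE x in lborel. time_Hs_sq ((2 * s + 1) / 4) \<eta> (\<lambda>_. 1) fh gh x
          \<le> ennreal ((C * (Hs_norm s fh + Hs_norm (s - 1) gh))\<^sup>2)) \<and>
      (AE x in lborel. time_Hs_sq ((2 * s - 1) / 4) \<eta> (\<lambda>\<xi>. \<i> * complex_of_real \<xi>) fh gh x
          \<le> ennreal ((C * (Hs_norm s fh + Hs_norm (s - 1) gh))\<^sup>2))"
proof -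
  have sm: "smooth_real \<eta>" and supp: "\<And>t. \<eta> t \<noteq> 0 \<Longrightarrow> t \<in> {-2..2}"
    using assms unfolding is_cutoff_def by auto
  have z: "\<And>t. \<bar>t\<bar> > 2 \<Longrightarrow> \<eta> t = 0"
  proof (rule ccontr)
    fix t :: real assume "\<bar>t\<bar> > 2" "\<eta> t \<noteq> 0"
    then show False using supp[of t] by auto
  qed
  have c: "continuous_on UNIV \<eta>" using Dk_cont[OF sm, of 0] by simp
  define N where "N = nat \<lceil>\<bar>s\<bar>\<rceil> + 2"
  obtain C0 where C0: "C0 \<ge> 0" and dec0: "\<And>\<sigma>. cmod (FT \<eta> \<sigma>) * (1 + \<sigma>\<^sup>2) ^ N \<le> C0"
    using FT_decay[OF sm z, of N] by blast
  have dec: "cmod (FT \<eta> \<sigma>) \<le> C0 * Qf \<sigma> ^ N" for \<sigma>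
  proof -
    have p: "(1 + \<sigma>\<^sup>2) ^ N > 0" by (simp add: add_pos_nonneg)
    have "cmod (FT \<eta> \<sigma>) \<le> C0 / (1 + \<sigma>\<^sup>2) ^ N" using dec0[of \<sigma>] p by (simp add: pos_le_divide_eq)
    then show ?thesis unfolding Qf_def by (simp add: power_one_over)
  qed
  have N1: "N \<ge> 1" unfolding N_def by simp
  have Nr: "real N \<ge> 1 + \<bar>r\<bar>" if "\<bar>r\<bar> \<le> \<bar>s\<bar> / 2 + 1/4" for r
  proof -
    have e: "real N = real_of_int \<lceil>\<bar>s\<bar>\<rceil> + 2" unfolding N_def by simp
    show ?thesis unfolding e using that le_of_int_ceiling[of "\<bar>s\<bar>"] abs_ge_zero[of s] by linarith
  qed
  have r1: "\<bar>(2 * s + 1) / 4\<bar> \<le> \<bar>s\<bar> / 2 + 1/4" by (rule r1_bound)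
  have r2: "\<bar>(2 * s - 1) / 4\<bar> \<le> \<bar>s\<bar> / 2 + 1/4" by (rule r2_bound)
  define C where "C = C0 * 2 powr (\<bar>s\<bar> + 2)"
  have fin: "ennreal (C0\<^sup>2 * 2 powr \<bar>r\<bar>) * (ennreal (2 * 2 powr \<bar>r\<bar>) * ennreal (X\<^sup>2))
      \<le> ennreal ((C * X)\<^sup>2)" if "\<bar>r\<bar> \<le> \<bar>s\<bar> / 2 + 1/4" for r X :: real
  proof -
    have p1: "2 * 2 powr \<bar>r\<bar> * 2 powr \<bar>r\<bar> = (2::real) powr (\<bar>r\<bar> + \<bar>r\<bar> + 1)"
      by (simp only: powr_add powr_one)
    have p2: "(2 powr (\<bar>s\<bar> + 2))\<^sup>2 = (2::real) powr ((\<bar>s\<bar> + 2) + (\<bar>s\<bar> + 2))"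
      by (simp only: powr_add power2_eq_square)
    have "C0\<^sup>2 * 2 powr \<bar>r\<bar> * (2 * 2 powr \<bar>r\<bar> * X\<^sup>2) = C0\<^sup>2 * X\<^sup>2 * (2 * 2 powr \<bar>r\<bar> * 2 powr \<bar>r\<bar>)"
      by (simp only: mult_ac)
    also have "\<dots> = C0\<^sup>2 * X\<^sup>2 * 2 powr (\<bar>r\<bar> + \<bar>r\<bar> + 1)" unfolding p1 ..
    also have "\<dots> \<le> C0\<^sup>2 * X\<^sup>2 * 2 powr ((\<bar>s\<bar> + 2) + (\<bar>s\<bar> + 2))"
      using that by (intro mult_left_mono powr_mono) auto
    also have "\<dots> = (C * X)\<^sup>2" unfolding C_def p2[symmetric]
      by (simp only: power_mult_distrib mult_ac)
    finally have "C0\<^sup>2 * 2 powr \<bar>r\<bar> * (2 * 2 powr \<bar>r\<bar> * X\<^sup>2) \<le> (C * X)\<^sup>2" .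
    then show ?thesis by (simp add: ennreal_mult[symmetric])
  qed
  show ?thesis
  proof (intro exI[of _ C] allI impI conjI AE_I2)
    fix fh gh x assume f: "in_Hs s fh" and g: "in_Hs (s - 1) gh"
    have [measurable]: "fh \<in> borel_measurable lborel" "gh \<in> borel_measurable lborel"
      using f g unfolding in_Hs_def by auto
    have sb: "ennreal (2 * 2 powr \<bar>r\<bar>) * (Hs_sq s fh + Hs_sq (s - 1) gh)
        \<le> ennreal (2 * 2 powr \<bar>r\<bar>) * ennreal ((Hs_norm s fh + Hs_norm (s - 1) gh)\<^sup>2)" for r
      by (intro mult_left_mono sum_bound f g) auto
    let ?r = "(2 * s + 1) / 4"
    have w: "(cmod ((\<lambda>_. 1::complex) \<xi>))\<^sup>2 * (1 + (wt \<xi>)\<^sup>2) powr ?r / rho \<xi> \<le> 2 powr \<bar>?r\<bar> * (1 + \<xi>\<^sup>2) powr s" for \<xi>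
      by (rule wgt_gen[where e = 0]) (auto simp: field_simps add_nonneg_eq_0_iff)
    have "time_Hs_sq ?r \<eta> (\<lambda>_. 1) fh gh x
        \<le> ennreal (C0\<^sup>2 * 2 powr \<bar>?r\<bar>) * (\<integral>\<^sup>+\<xi>. ennreal ((cmod ((\<lambda>_. 1::complex) \<xi>))\<^sup>2 * (afun fh gh \<xi>)\<^sup>2 * (1 + (wt \<xi>)\<^sup>2) powr ?r / rho \<xi>) \<partial>lborel)"
      by (rule main_bound[OF c z dec C0 N1 Nr[OF r1]]) auto
    also have "\<dots> \<le> ennreal (C0\<^sup>2 * 2 powr \<bar>?r\<bar>) * (ennreal (2 * 2 powr \<bar>?r\<bar>) * (Hs_sq s fh + Hs_sq (s - 1) gh))"
      by (intro mult_left_mono Hs_int_bound w) auto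
    also have "\<dots> \<le> ennreal ((C * (Hs_norm s fh + Hs_norm (s - 1) gh))\<^sup>2)"
      by (rule order_trans[OF mult_left_mono[OF sb] fin[OF r1]]) auto
    finally show "time_Hs_sq ?r \<eta> (\<lambda>_. 1) fh gh x \<le> ennreal ((C * (Hs_norm s fh + Hs_norm (s - 1) gh))\<^sup>2)" .
  next
    fix fh gh x assume f: "in_Hs s fh" and g: "in_Hs (s - 1) gh"
    have [measurable]: "fh \<in> borel_measurable lborel" "gh \<in> borel_measurable lborel"
      using f g unfolding in_Hs_def by auto
    have sb: "ennreal (2 * 2 powr \<bar>r\<bar>) * (Hs_sq s fh + Hs_sq (s - 1) gh)
        \<le> ennreal (2 * 2 powr \<bar>r\<bar>) * ennreal ((Hs_norm s fh + Hs_norm (s - 1) gh)\<^sup>2)" for r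
      by (intro mult_left_mono sum_bound f g) auto
    let ?r = "(2 * s - 1) / 4"
    have w: "(cmod (\<i> * complex_of_real \<xi>))\<^sup>2 * (1 + (wt \<xi>)\<^sup>2) powr ?r / rho \<xi> \<le> 2 powr \<bar>?r\<bar> * (1 + \<xi>\<^sup>2) powr s" for \<xi>
      by (rule wgt_gen[where e = 1]) (auto simp: norm_mult field_simps)
    have "time_Hs_sq ?r \<eta> (\<lambda>\<xi>. \<i> * complex_of_real \<xi>) fh gh x
        \<le> ennreal (C0\<^sup>2 * 2 powr \<bar>?r\<bar>) * (\<integral>\<^sup>+\<xi>. ennreal ((cmod (\<i> * complex_of_real \<xi>))\<^sup>2 * (afun fh gh \<xi>)\<^sup>2 * (1 + (wt \<xi>)\<^sup>2) powr ?r / rho \<xi>) \<partial>lborel)"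
      by (rule main_bound[OF c z dec C0 N1 Nr[OF r2]]) auto
    also have "\<dots> \<le> ennreal (C0\<^sup>2 * 2 powr \<bar>?r\<bar>) * (ennreal (2 * 2 powr \<bar>?r\<bar>) * (Hs_sq s fh + Hs_sq (s - 1) gh))"
      by (intro mult_left_mono Hs_int_bound w) auto
    also have "\<dots> \<le> ennreal ((C * (Hs_norm s fh + Hs_norm (s - 1) gh))\<^sup>2)"
      by (rule order_trans[OF mult_left_mono[OF sb] fin[OF r2]]) auto
    finally show "time_Hs_sq ?r \<eta> (\<lambda>\<xi>. \<i> * complex_of_real \<xi>) fh gh x \<le> ennreal ((C * (Hs_norm s fh + Hs_norm (s - 1) gh))\<^sup>2)" .
  qed
qed

end
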